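(* Let $H=(\mathcal{V},\mathcal{I})$ be an interval hypergraph and $k\geq1$ an integer. There exists a partition of $\mathcal{I}$ into $k$ parts such that each part is an exactly hittable set if and only if there exists a conflict-free colouring of $H$ with $k$ non-zero colours.
   Context: An interval hypergraph has vertex set $[n]=\{1,\dots,n\}$ and hyperedges that are nonempty sets of consecutive integers. A set (family) $\mathcal{S}$ of hyperedges is exactly hittable if there is a set $T\subseteq\mathcal{V}$ (an exact hitting set) with $|T\cap I|=1$ for every $I\in\mathcal{S}$. A conflict-free colouring of $H$ is a function $C:\mathcal{V}\to\{0,1,2,\dots\}$ such that every hyperedge $I$ contains a colour $j\geq1$ with $|I\cap C^{-1}(j)|=1$; colour $0$ is not counted among the colours used. *)

theory Defs
  imports Main
begin

definition interval_hypergraph :: "nat \<Rightarrow> nat set set \<Rightarrow> bool" where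
  "interval_hypergraph n E \<longleftrightarrow> (\<forall>I\<in>E. \<exists>a b. 1 \<le> a \<and> a \<le> b \<and> b \<le> n \<and> I = {a..b})"

definition exactly_hittable :: "nat set \<Rightarrow> nat set set \<Rightarrow> bool" where
  "exactly_hittable V S \<longleftrightarrow> (\<exists>T. T \<subseteq> V \<and> (\<forall>I\<in>S. card (T \<inter> I) = 1))"

text \<open>A conflict-free colouring of (V,E); colour 0 is the "uncoloured" colour.\<close>
definition conflict_free :: "nat set \<Rightarrow> nat set set \<Rightarrow> (nat \<Rightarrow> nat) \<Rightarrow> bool" where
  "conflict_free V E C \<longleftrightarrow> (\<forall>I\<in>E. \<exists>j\<ge>1. card (I \<inter> {v\<in>V. C v = j}) = 1)"

definition conflict_free_k :: "nat set \<Rightarrow> nat set set \<Rightarrow> nat \<Rightarrow> (nat \<Rightarrow> nat) \<Rightarrow> bool" where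
  "conflict_free_k V E k C \<longleftrightarrow> conflict_free V E C \<and> (\<forall>v\<in>V. C v \<le> k)"

text \<open>E is partitioned into the k (possibly empty) parts P 0, ..., P (k-1).\<close>
definition is_partition_k :: "nat set set \<Rightarrow> nat \<Rightarrow> (nat \<Rightarrow> nat set set) \<Rightarrow> bool" where
  "is_partition_k E k P \<longleftrightarrow> (\<Union>i<k. P i) = E \<and> (\<forall>i<k. \<forall>j<k. i \<noteq> j \<longrightarrow> P i \<inter> P j = {})"

end

theory Submission imports Defs begin

definition hits :: "nat set \<Rightarrow> nat \<Rightarrow> nat \<Rightarrow> bool" where
  "hits X a b \<longleftrightarrow> (\<exists>u. X \<inter> {a..b} = {u})"

lemma crossed:
  fixes T S :: "nat set"
  assumes vT: "v \<in> T" and vS: "v \<in> S"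
    and w1: "a1 \<le> w" "w < v" "v \<le> b1" "w \<in> T" and S1: "S \<inter> {a1..b1} = {v}"
    and w2: "a2 \<le> v" "v < w'" "w' \<le> b2" "w' \<in> S" and T2: "T \<inter> {a2..b2} = {v}"
  shows "\<exists>A B. A \<union> B = T \<union> S \<and> A \<inter> B = T \<inter> S - {v} \<and>
     (\<forall>a b. hits T a b \<or> hits S a b \<longrightarrow> hits A a b \<or> hits B a b)"
proof -
  define A where "A = {x\<in>T. x<v} \<union> {x\<in>S. v<x}"
  define B where "B = {x\<in>S. x<v} \<union> {v} \<union> {x\<in>T. v<x}"
  have U: "A \<union> B = T \<union> S"
    unfolding A_def B_def using vT by (auto simp: linorder_neq_iff)
  have N: "A \<inter> B = T \<inter> S - {v}"
    unfolding A_def B_def by (auto simp: linorder_neq_iff)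
  have C: "hits A a b \<or> hits B a b" if h: "hits T a b \<or> hits S a b" for a b
  proof (cases "b < v")
    case True
    then have "A \<inter> {a..b} = T \<inter> {a..b}" "B \<inter> {a..b} = S \<inter> {a..b}"
      unfolding A_def B_def by auto
    then show ?thesis using h unfolding hits_def by simp
  next
    case nb: False
    show ?thesis
    proof (cases "v < a")
      case True
      then have "A \<inter> {a..b} = S \<inter> {a..b}" "B \<inter> {a..b} = T \<inter> {a..b}"
        unfolding A_def B_def by auto
      then show ?thesis using h unfolding hits_def by metis
    next
      case na: False
      then have va: "a \<le> v" "v \<le> b" using nb by auto
      have "B \<inter> {a..b} = {v}"
      proof -
        have key: "x = v" if x: "x \<in> B" "a \<le> x" "x \<le> b" for x
        proof (rule ccontr)
          assume xv: "x \<noteq> v"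
          from h show False
          proof
            assume "hits T a b"
            then obtain u where u: "T \<inter> {a..b} = {u}" unfolding hits_def by auto
            then have uv: "u = v" using vT va by auto
            show False
            proof (cases "x < v")
              case True
              then have "x \<in> S" using x unfolding B_def by auto
              have "w \<notin> {a..b}" using u uv w1 by auto
              then have "w < a" using w1 va by auto
              then have "x \<in> S \<inter> {a1..b1}" using `x \<in> S` w1 x True by auto
              then show False using S1 xv by blast
            next
              case False
              then have "x \<in> T" using x xv unfolding B_def by auto
              then have "x \<in> T \<inter> {a..b}" using x by simp
              then show False using u uv xv by blast
            qed
          next
            assume "hits S a b"
            then obtain u where u: "S \<inter> {a..b} = {u}" unfolding hits_def by auto
            then have uv: "u = v" using vS va by auto
            show False
            proof (cases "x < v")
              case True
              then have "x \<in> S" using x unfolding B_def by auto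
              then have "x \<in> S \<inter> {a..b}" using x by simp
              then show False using u uv xv by blast
            next
              case False
              then have "x \<in> T" "v < x" using x xv unfolding B_def by auto
              have "w' \<notin> {a..b}" using u uv w2 by auto
              then have "b < w'" using w2 va by auto
              then have "x \<in> T \<inter> {a2..b2}" using `x \<in> T` `v < x` w2 x by auto
              then show False using T2 xv by blast
            qed
          qed
        qed
        have vB: "v \<in> B" unfolding B_def by blast
        show ?thesis
        proof (rule set_eqI)
          fix x
          show "x \<in> B \<inter> {a..b} \<longleftrightarrow> x \<in> {v}"
            using key[of x] vB va by auto
        qed
      qed
      then show ?thesis unfolding hits_def by blast
    qed
  qed
  show ?thesis using U N C by blast
qed

lemma pair_op:
  fixes T S :: "nat set"
  assumes vT: "v \<in> T" and vS: "v \<in> S"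
  shows "\<exists>A B. A \<union> B = T \<union> S \<and> A \<inter> B = T \<inter> S - {v} \<and>
     (\<forall>a b. hits T a b \<or> hits S a b \<longrightarrow> hits A a b \<or> hits B a b)"
proof (cases "\<forall>a b. a \<le> v \<and> v \<le> b \<and> S \<inter> {a..b} = {v} \<longrightarrow> T \<inter> {a..b} = {v}")
  case True
  have "hits T a b \<or> hits (S - {v}) a b" if h: "hits T a b \<or> hits S a b" for a b
  proof -
    { assume "hits S a b"
      then obtain u where u: "S \<inter> {a..b} = {u}" unfolding hits_def by auto
      have ?thesis
      proof (cases "a \<le> v \<and> v \<le> b")
        case True
        then have "u = v" using u vS by auto
        then show ?thesis using True u \<open>\<forall>a b. _\<close> unfolding hits_def by blast
      next
        case False
        then have "(S - {v}) \<inter> {a..b} = S \<inter> {a..b}" by auto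
        then show ?thesis using u unfolding hits_def by auto
      qed }
    then show ?thesis using h by blast
  qed
  moreover have "T \<union> (S - {v}) = T \<union> S" "T \<inter> (S - {v}) = T \<inter> S - {v}" using vT by auto
  ultimately show ?thesis by blast
next
  case F1: False
  then obtain a1 b1 where ab1: "a1 \<le> v" "v \<le> b1" "S \<inter> {a1..b1} = {v}" "T \<inter> {a1..b1} \<noteq> {v}"
    by blast
  have "v \<in> T \<inter> {a1..b1}" using vT ab1 by auto
  then have "\<exists>w\<in>T \<inter> {a1..b1}. w \<noteq> v" using ab1(4) by blast
  then obtain w where w: "w \<in> T" "a1 \<le> w" "w \<le> b1" "w \<noteq> v" by auto
  show ?thesis
  proof (cases "\<forall>a b. a \<le> v \<and> v \<le> b \<and> T \<inter> {a..b} = {v} \<longrightarrow> S \<inter> {a..b} = {v}")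
    case True
    have "hits (T - {v}) a b \<or> hits S a b" if h: "hits T a b \<or> hits S a b" for a b
    proof -
      { assume "hits T a b"
        then obtain u where u: "T \<inter> {a..b} = {u}" unfolding hits_def by auto
        have ?thesis
        proof (cases "a \<le> v \<and> v \<le> b")
          case True
          then have "u = v" using u vT by auto
          then show ?thesis using True u \<open>\<forall>a b. _\<close> unfolding hits_def by blast
        next
          case False
          then have "(T - {v}) \<inter> {a..b} = T \<inter> {a..b}" by auto
          then show ?thesis using u unfolding hits_def by auto
        qed }
      then show ?thesis using h by blast
    qed
    moreover have "(T - {v}) \<union> S = T \<union> S" "(T - {v}) \<inter> S = T \<inter> S - {v}" using vS by auto
    ultimately show ?thesis by blast
  next
    case False
    then obtain a2 b2 where ab2: "a2 \<le> v" "v \<le> b2" "T \<inter> {a2..b2} = {v}" "S \<inter> {a2..b2} \<noteq> {v}"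
      by blast
    have "v \<in> S \<inter> {a2..b2}" using vS ab2 by auto
    then have "\<exists>w\<in>S \<inter> {a2..b2}. w \<noteq> v" using ab2(4) by blast
    then obtain w' where w': "w' \<in> S" "a2 \<le> w'" "w' \<le> b2" "w' \<noteq> v" by auto
    have cases: "(w < v \<and> v < w') \<or> (w' < v \<and> v < w)"
    proof (rule ccontr)
      assume "\<not> ?thesis"
      then have "(w < v \<and> w' < v) \<or> (v < w \<and> v < w')" using w w' by auto
      then show False
      proof
        assume l: "w < v \<and> w' < v"
        show False
        proof (cases "w \<le> w'")
          case True
          then have "w' \<in> S \<inter> {a1..b1}" using l w w' ab1(1,2) by auto
          then show False using ab1(3) w'(4) by blast
        next
          case False
          then have "w \<in> T \<inter> {a2..b2}" using l w w' ab2(1,2) by auto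
          then show False using ab2(3) w(4) by blast
        qed
      next
        assume l: "v < w \<and> v < w'"
        show False
        proof (cases "w \<le> w'")
          case True
          then have "w \<in> T \<inter> {a2..b2}" using l w w' ab2(1,2) by auto
          then show False using ab2(3) w(4) by blast
        next
          case False
          then have "w' \<in> S \<inter> {a1..b1}" using l w w' ab1(1,2) by auto
          then show False using ab1(3) w'(4) by blast
        qed
      qed
    qed
    then show ?thesis
    proof
      assume c: "w < v \<and> v < w'"
      show ?thesis
        by (rule crossed[OF vT vS _ _ _ _ ab1(3) _ _ _ _ ab2(3)]) (use c w w' ab1(1,2) ab2(1,2) in auto)
    next
      assume c: "w' < v \<and> v < w"
      obtain A B where AB: "A \<union> B = S \<union> T" "A \<inter> B = S \<inter> T - {v}"
        "\<forall>a b. hits S a b \<or> hits T a b \<longrightarrow> hits A a b \<or> hits B a b"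
        using crossed[OF vS vT w'(2) _ ab2(2) w'(1) ab2(3) ab1(1) _ w(3) w(1) ab1(3)] c by blast
      then have "B \<union> A = T \<union> S \<and> B \<inter> A = T \<inter> S - {v} \<and>
        (\<forall>a b. hits T a b \<or> hits S a b \<longrightarrow> hits B a b \<or> hits A a b)" by blast
      then show ?thesis by blast
    qed
  qed
qed

lemma sum2:
  fixes f :: "nat \<Rightarrow> nat"
  assumes "finite K" "i \<in> K" "j \<in> K" "i \<noteq> j"
  shows "sum f K = f i + f j + sum f (K - {i,j})"
proof -
  have "sum f K = f i + sum f (K - {i})" by (rule sum.remove) (use assms in auto)
  moreover have "sum f (K - {i}) = f j + sum f (K - {i} - {j})" by (rule sum.remove) (use assms in auto)
  moreover have "K - {i} - {j} = K - {i,j}" by auto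
  ultimately show ?thesis by simp
qed

lemma disj_step:
  fixes k m :: nat and E :: "nat set set" and V :: "nat set"
  assumes fin: "finite V" and EI: "\<forall>I\<in>E. \<exists>a b. I = {a..b}"
  shows "\<forall>T. (\<Sum>i<k. card (T i)) = m \<longrightarrow> (\<forall>i<k. T i \<subseteq> V) \<longrightarrow>
    (\<forall>I\<in>E. \<exists>i<k. \<exists>u. T i \<inter> I = {u}) \<longrightarrow>
    (\<exists>D. (\<forall>i<k. D i \<subseteq> V) \<and> (\<forall>i<k. \<forall>j<k. i \<noteq> j \<longrightarrow> D i \<inter> D j = {}) \<and>
         (\<forall>I\<in>E. \<exists>i<k. \<exists>u. D i \<inter> I = {u}))"
proof (induction m rule: less_induct)
  case (less m)
  show ?case
  proof (intro allI impI)
    fix T :: "nat \<Rightarrow> nat set"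
    assume m: "(\<Sum>i<k. card (T i)) = m" and TV: "\<forall>i<k. T i \<subseteq> V"
      and cov: "\<forall>I\<in>E. \<exists>i<k. \<exists>u. T i \<inter> I = {u}"
    show "\<exists>D. (\<forall>i<k. D i \<subseteq> V) \<and> (\<forall>i<k. \<forall>j<k. i \<noteq> j \<longrightarrow> D i \<inter> D j = {}) \<and>
         (\<forall>I\<in>E. \<exists>i<k. \<exists>u. D i \<inter> I = {u})"
    proof (cases "\<forall>i<k. \<forall>j<k. i \<noteq> j \<longrightarrow> T i \<inter> T j = {}")
      case True
      then show ?thesis using TV cov by blast
    next
      case False
      then obtain i j v where ij: "i < k" "j < k" "i \<noteq> j" "v \<in> T i" "v \<in> T j" by blast
      obtain A B where AB: "A \<union> B = T i \<union> T j" "A \<inter> B = T i \<inter> T j - {v}"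
        "\<forall>a b. hits (T i) a b \<or> hits (T j) a b \<longrightarrow> hits A a b \<or> hits B a b"
        using pair_op[OF ij(4,5)] by blast
      define T' where "T' = T(i := A, j := B)"
      have T'i: "T' i = A" and T'j: "T' j = B" using ij(3) unfolding T'_def by auto
      have T'l: "T' l = T l" if "l \<noteq> i" "l \<noteq> j" for l using that unfolding T'_def by auto
      have finT: "finite (T l)" if "l < k" for l using TV that fin finite_subset by blast
      have ABV: "A \<subseteq> V" "B \<subseteq> V" using AB(1) TV ij by blast+
      have finAB: "finite A" "finite B" using ABV fin finite_subset by blast+
      have T'V: "\<forall>l<k. T' l \<subseteq> V" using TV ABV T'i T'j T'l by metis
      have cov': "\<forall>I\<in>E. \<exists>l<k. \<exists>u. T' l \<inter> I = {u}"
      proof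
        fix I assume IE: "I \<in> E"
        obtain a b where Iab: "I = {a..b}" using EI IE by blast
        obtain l u where lu: "l < k" "T l \<inter> I = {u}" using cov IE by blast
        show "\<exists>l<k. \<exists>u. T' l \<inter> I = {u}"
        proof (cases "l = i \<or> l = j")
          case True
          then have "hits (T i) a b \<or> hits (T j) a b" using lu Iab unfolding hits_def by blast
          then have "hits A a b \<or> hits B a b" using AB(3) by blast
          then show ?thesis using T'i T'j ij Iab unfolding hits_def by metis
        next
          case False
          then show ?thesis using lu T'l by metis
        qed
      qed
      have s1: "(\<Sum>l<k. card (T l)) = card (T i) + card (T j) + (\<Sum>l\<in>{..<k} - {i,j}. card (T l))"
        using sum2[of "{..<k}" i j "\<lambda>l. card (T l)"] ij by auto
      have s2: "(\<Sum>l<k. card (T' l)) = card A + card B + (\<Sum>l\<in>{..<k} - {i,j}. card (T' l))"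
        using sum2[of "{..<k}" i j "\<lambda>l. card (T' l)"] ij T'i T'j by auto
      have s3: "(\<Sum>l\<in>{..<k} - {i,j}. card (T' l)) = (\<Sum>l\<in>{..<k} - {i,j}. card (T l))"
        by (rule sum.cong) (auto simp: T'l)
      have c1: "card A + card B = card (T i \<union> T j) + card (T i \<inter> T j - {v})"
        using card_Un_Int[OF finAB] AB by simp
      have c2: "card (T i) + card (T j) = card (T i \<union> T j) + card (T i \<inter> T j)"
        using card_Un_Int[OF finT[OF ij(1)] finT[OF ij(2)]] by simp
      have c3: "card (T i \<inter> T j - {v}) < card (T i \<inter> T j)"
        using ij finT by (intro card_Diff1_less) auto
      have lt: "(\<Sum>l<k. card (T' l)) < m" using s1 s2 s3 c1 c2 c3 m by linarith
      show ?thesis using less.IH[OF lt] T'V cov' by blast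
    qed
  qed
qed

theorem theorem4:
  fixes n k :: nat and E :: "nat set set"
  assumes "interval_hypergraph n E" and "k \<ge> 1"
  shows "(\<exists>P. is_partition_k E k P \<and> (\<forall>i<k. exactly_hittable {1..n} (P i)))
     \<longleftrightarrow> (\<exists>C. conflict_free_k {1..n} E k C)"
proof
  assume "\<exists>P. is_partition_k E k P \<and> (\<forall>i<k. exactly_hittable {1..n} (P i))"
  then obtain P where P: "is_partition_k E k P" "\<forall>i<k. exactly_hittable {1..n} (P i)" by blast
  have "\<forall>i\<in>{..<k}. \<exists>T. T \<subseteq> {1..n} \<and> (\<forall>I\<in>P i. card (T \<inter> I) = 1)"
    using P(2) unfolding exactly_hittable_def by blast
  then obtain T where T: "\<forall>i\<in>{..<k}. T i \<subseteq> {1..n} \<and> (\<forall>I\<in>P i. card (T i \<inter> I) = 1)"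
    using bchoice[of "{..<k}"] by metis
  have EI: "\<forall>I\<in>E. \<exists>a b. I = {a..b}" using assms(1) unfolding interval_hypergraph_def by blast
  have cov: "\<forall>I\<in>E. \<exists>i<k. \<exists>u. T i \<inter> I = {u}"
  proof
    fix I assume "I \<in> E"
    then obtain i where "i < k" "I \<in> P i" using P(1) unfolding is_partition_k_def by blast
    then show "\<exists>i<k. \<exists>u. T i \<inter> I = {u}" using T card_1_singleton_iff by (metis One_nat_def lessThan_iff)
  qed
  obtain D where D: "\<forall>i<k. D i \<subseteq> {1..n}" "\<forall>i<k. \<forall>j<k. i \<noteq> j \<longrightarrow> D i \<inter> D j = {}"
      "\<forall>I\<in>E. \<exists>i<k. \<exists>u. D i \<inter> I = {u}"
  proof -
    have TV: "\<forall>i<k. T i \<subseteq> {1..n}" using T by auto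
    have X: "\<exists>D. (\<forall>i<k. D i \<subseteq> {1..n}) \<and> (\<forall>i<k. \<forall>j<k. i \<noteq> j \<longrightarrow> D i \<inter> D j = {}) \<and>
         (\<forall>I\<in>E. \<exists>i<k. \<exists>u. D i \<inter> I = {u})"
      by (rule disj_step[OF finite_atLeastAtMost EI, rule_format, OF refl TV[rule_format] cov[rule_format]])
    show ?thesis using X that by blast
  qed
  define C where "C v = (if \<exists>i<k. v \<in> D i then Suc (SOME i. i < k \<and> v \<in> D i) else 0)" for v
  have Cv: "C v = Suc i" if "i < k" "v \<in> D i" for v i
  proof -
    have ex: "\<exists>i<k. v \<in> D i" using that by blast
    have "(SOME i. i < k \<and> v \<in> D i) = i"
    proof (rule some_equality)
      show "i < k \<and> v \<in> D i" using that by simp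
      fix j assume "j < k \<and> v \<in> D j"
      then show "j = i" using D(2) that by blast
    qed
    then show ?thesis unfolding C_def using ex by simp
  qed
  have Ck: "C v \<le> k" for v
  proof (cases "\<exists>i<k. v \<in> D i")
    case True
    then have "(SOME i. i < k \<and> v \<in> D i) < k" by (metis (mono_tags, lifting) someI_ex)
    then show ?thesis unfolding C_def using True by simp
  next
    case False then show ?thesis unfolding C_def by auto
  qed
  have cls: "{v\<in>{1..n}. C v = Suc i} = D i" if "i < k" for i
  proof
    show "D i \<subseteq> {v\<in>{1..n}. C v = Suc i}" using D(1) Cv that by blast
    show "{v\<in>{1..n}. C v = Suc i} \<subseteq> D i"
    proof
      fix v assume v: "v \<in> {v\<in>{1..n}. C v = Suc i}"
      then have ex: "\<exists>i<k. v \<in> D i" unfolding C_def by (auto split: if_splits)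
      then obtain j where j: "j < k" "v \<in> D j" by blast
      have "C v = Suc j" using Cv[OF j] .
      moreover have "C v = Suc i" using v by simp
      ultimately have "i = j" by simp
      then show "v \<in> D i" using j by simp
    qed
  qed
  have "conflict_free_k {1..n} E k C"
    unfolding conflict_free_k_def conflict_free_def
  proof (intro conjI ballI)
    fix I assume "I \<in> E"
    then obtain i u where iu: "i < k" "D i \<inter> I = {u}" using D(3) by blast
    have "{v\<in>{1..n}. C v = Suc i} = D i" using cls[OF iu(1)] .
    then have "I \<inter> {v\<in>{1..n}. C v = Suc i} = {u}" using iu(2) by (simp add: Int_commute)
    then have c1: "card (I \<inter> {v\<in>{1..n}. C v = Suc i}) = 1" by simp
    show "\<exists>j\<ge>1. card (I \<inter> {v\<in>{1..n}. C v = j}) = 1"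
      by (rule exI[of _ "Suc i"]) (simp only: c1, simp)
  next
    fix v show "C v \<le> k" using Ck by simp
  qed
  then show "\<exists>C. conflict_free_k {1..n} E k C" by blast
next
  assume "\<exists>C. conflict_free_k {1..n} E k C"
  then obtain C where C: "conflict_free_k {1..n} E k C" by blast
  define J where "J I = (SOME j. j \<ge> 1 \<and> card (I \<inter> {v\<in>{1..n}. C v = j}) = 1)" for I
  have J: "J I \<ge> 1 \<and> card (I \<inter> {v\<in>{1..n}. C v = J I}) = 1" if "I \<in> E" for I
  proof -
    have "\<exists>j. j \<ge> 1 \<and> card (I \<inter> {v\<in>{1..n}. C v = j}) = 1"
      using C that unfolding conflict_free_k_def conflict_free_def by blast
    then show ?thesis unfolding J_def by (rule someI_ex)
  qed
  have Jk: "J I \<le> k" if "I \<in> E" for I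
  proof -
    have "I \<inter> {v\<in>{1..n}. C v = J I} \<noteq> {}" using J[OF that] by (metis card.empty zero_neq_one)
    then obtain v where v: "v \<in> {1..n}" "C v = J I" by blast
    have "C v \<le> k" using C v(1) unfolding conflict_free_k_def by blast
    then show ?thesis using v(2) by simp
  qed
  define P where "P i = {I\<in>E. J I = Suc i}" for i
  have "is_partition_k E k P"
    unfolding is_partition_k_def
  proof (intro conjI allI impI)
    show "(\<Union>i<k. P i) = E"
    proof
      show "(\<Union>i<k. P i) \<subseteq> E" unfolding P_def by auto
      show "E \<subseteq> (\<Union>i<k. P i)"
      proof
        fix I assume I: "I \<in> E"
        then have l: "J I - 1 < k" "J I = Suc (J I - 1)" using J[OF I] Jk[OF I] by auto
        have "I \<in> P (J I - 1)" unfolding P_def using I l(2) by simp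
        then show "I \<in> (\<Union>i<k. P i)" using l(1) by blast
      qed
    qed
    fix i j assume "i < k" "j < k" "i \<noteq> j"
    then show "P i \<inter> P j = {}" unfolding P_def by auto
  qed
  moreover have "exactly_hittable {1..n} (P i)" for i
    unfolding exactly_hittable_def
  proof (intro exI[of _ "{v\<in>{1..n}. C v = Suc i}"] conjI ballI)
    show "{v\<in>{1..n}. C v = Suc i} \<subseteq> {1..n}" by auto
    fix I assume "I \<in> P i"
    then have "I \<in> E" "J I = Suc i" unfolding P_def by auto
    then have "card (I \<inter> {v\<in>{1..n}. C v = Suc i}) = 1" using J by metis
    then show "card ({v\<in>{1..n}. C v = Suc i} \<inter> I) = 1" by (simp only: Int_commute)
  qed
  ultimately show "\<exists>P. is_partition_k E k P \<and> (\<forall>i<k. exactly_hittable {1..n} (P i))" by blast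
qed

end
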